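(* Let $\mathbb{F}\subseteq\mathbb{C}$ be a subfield closed under complex conjugation, $m\ge2$, $N\ge1$. Let $\mathrm{v}=(v_1,\dots,v_m)\in\mathbb{F}^m$ have unit norm and let $V\in\mathbb{F}^{m\times m}$ be a unitary matrix whose first row is $\mathrm{v}$. Let $\mathbf{A}_1(z)=(a_{11}(z),\dots,a_{1m}(z))$ be a row of polynomials $a_{1j}(z)=\sum_{k=0}^N\alpha_{kj}z^k$, $\alpha_{kj}\in\mathbb{F}$, with $\sum_{j=1}^m|\alpha_{Nj}|>0$, such that $\mathbf{A}_1(z)\widetilde{\mathbf{A}_1}(z)=1$ for $z\in\mathbb{C}\setminus\{0\}$ and $\mathbf{A}_1(1)=\mathrm{v}$. Then there exists a unique $\mathbf{A}(z)\in\mathcal{WM}(m,N,N,\mathbb{F})$ with $\mathbf{A}(1)=V$ whose first row is $\mathbf{A}_1(z)$.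
   Context: For a Laurent polynomial $p(z)=\sum_kc_kz^k$, $\widetilde{p}(z)=\sum_k\overline{c_k}z^{-k}$; for a matrix of Laurent polynomials $P(z)=(p_{ij})$, $\widetilde{P}(z)=(\widetilde{p_{ij}})^T$. $\mathcal{WM}(m,N,N,\mathbb{F})$ is the set of matrix polynomials $\mathbf{A}(z)=\sum_{k=0}^NA_kz^k$ with $A_k\in\mathbb{F}^{m\times m}$, $A_N\ne0$, satisfying $\mathbf{A}(z)\widetilde{\mathbf{A}}(z)=I_m$ for $z\ne0$ (where $\widetilde{\mathbf{A}}(z)=\sum_kA_k^*z^{-k}$) and $\det\mathbf{A}(z)=c\,z^N$ for some constant $c$. *)

theory Defs
  imports Complex_Main "Jordan_Normal_Form.Determinant"
begin

definition conj_closed_subfield :: "complex set \<Rightarrow> bool" where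
  "conj_closed_subfield F \<longleftrightarrow> 0 \<in> F \<and> 1 \<in> F \<and>
     (\<forall>x\<in>F. \<forall>y\<in>F. x + y \<in> F \<and> x * y \<in> F) \<and>
     (\<forall>x\<in>F. - x \<in> F) \<and> (\<forall>x\<in>F. x \<noteq> 0 \<longrightarrow> inverse x \<in> F) \<and>
     (\<forall>x\<in>F. cnj x \<in> F)"

definition mpoly_eval :: "nat \<Rightarrow> nat \<Rightarrow> (nat \<Rightarrow> complex mat) \<Rightarrow> complex \<Rightarrow> complex mat" where
  "mpoly_eval m N C z = mat m m (\<lambda>(i,j). \<Sum>k\<le>N. C k $$ (i,j) * z ^ k)"

definition mpoly_tilde_eval :: "nat \<Rightarrow> nat \<Rightarrow> (nat \<Rightarrow> complex mat) \<Rightarrow> complex \<Rightarrow> complex mat" where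
  "mpoly_tilde_eval m N C z = mat m m (\<lambda>(i,j). \<Sum>k\<le>N. cnj (C k $$ (j,i)) * inverse z ^ k)"

definition WM :: "nat \<Rightarrow> nat \<Rightarrow> complex set \<Rightarrow> (nat \<Rightarrow> complex mat) \<Rightarrow> bool" where
  "WM m N F C \<longleftrightarrow>
     (\<forall>k. C k \<in> carrier_mat m m) \<and>
     (\<forall>k\<le>N. \<forall>i<m. \<forall>j<m. C k $$ (i,j) \<in> F) \<and>
     (\<forall>k>N. C k = 0\<^sub>m m m) \<and>
     C N \<noteq> 0\<^sub>m m m \<and>
     (\<forall>z. z \<noteq> 0 \<longrightarrow> mpoly_eval m N C z * mpoly_tilde_eval m N C z = 1\<^sub>m m) \<and>
     (\<exists>c. \<forall>z. det (mpoly_eval m N C z) = c * z ^ N)"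

definition conj_transpose :: "complex mat \<Rightarrow> complex mat" where
  "conj_transpose V = mat (dim_col V) (dim_row V) (\<lambda>(i,j). cnj (V $$ (j,i)))"

end

theory Submission
  imports Defs
begin

definition evr :: "nat \<Rightarrow> nat \<Rightarrow> nat \<Rightarrow> (nat \<Rightarrow> complex mat) \<Rightarrow> complex \<Rightarrow> complex mat" where
  "evr r m M C z = mat r m (\<lambda>(i,j). \<Sum>k\<le>M. C k $$ (i,j) * z ^ k)"
definition ter :: "nat \<Rightarrow> nat \<Rightarrow> nat \<Rightarrow> (nat \<Rightarrow> complex mat) \<Rightarrow> complex \<Rightarrow> complex mat" where
  "ter r m M C z = mat m r (\<lambda>(i,j). \<Sum>k\<le>M. cnj (C k $$ (j,i)) * inverse z ^ k)"

definition sa :: "nat \<Rightarrow> (nat \<Rightarrow> complex) \<Rightarrow> complex" where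
  "sa m a = (\<Sum>j\<in>{0..<m}. a j * cnj (a j))"
definition Pm :: "nat \<Rightarrow> (nat \<Rightarrow> complex) \<Rightarrow> complex mat" where
  "Pm m a = mat m m (\<lambda>(i,j). cnj (a i) * a j / sa m a)"
definition Tm :: "nat \<Rightarrow> (nat \<Rightarrow> complex) \<Rightarrow> complex \<Rightarrow> complex mat" where
  "Tm m a z = mat m m (\<lambda>(i,j). (if i = j then 1 else 0) + (z - 1) * (cnj (a i) * a j / sa m a))"

lemma Tm_carrier[simp]: "Tm m a z \<in> carrier_mat m m" by (simp add: Tm_def)
lemma Pm_carrier[simp]: "Pm m a \<in> carrier_mat m m" by (simp add: Pm_def)
lemma Tm_dims[simp]: "dim_row (Tm m a z) = m" "dim_col (Tm m a z) = m" by (simp_all add: Tm_def)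
lemma Pm_dims[simp]: "dim_row (Pm m a) = m" "dim_col (Pm m a) = m" by (simp_all add: Pm_def)

lemma cnj_sa[simp]: "cnj (sa m a) = sa m a"
  by (simp add: sa_def mult.commute)

lemma sum_pp:
  assumes s: "sa m a \<noteq> 0"
  shows "(\<Sum>l\<in>{0..<m}. cnj (a i) * a l / sa m a * (cnj (a l) * a j / sa m a)) = cnj (a i) * a j / sa m a"
proof -
  have "(\<Sum>l\<in>{0..<m}. cnj (a i) * a l / sa m a * (cnj (a l) * a j / sa m a))
      = (\<Sum>l\<in>{0..<m}. (cnj (a i) * a j / (sa m a * sa m a)) * (a l * cnj (a l)))"
    by (rule sum.cong, auto)
  also have "\<dots> = (cnj (a i) * a j / (sa m a * sa m a)) * (\<Sum>l\<in>{0..<m}. a l * cnj (a l))"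
    by (simp add: sum_distrib_left)
  also have "\<dots> = cnj (a i) * a j / sa m a" using s by (simp add: sa_def[symmetric] field_simps)
  finally show ?thesis .
qed

lemma Tm_mult:
  assumes s: "sa m a \<noteq> 0"
  shows "Tm m a z * Tm m a w = Tm m a (z * w)"
proof (rule eq_matI)
  fix i j assume i: "i < dim_row (Tm m a (z * w))" and j: "j < dim_col (Tm m a (z * w))"
  hence i: "i < m" and j: "j < m" by auto
  define p where "p = (\<lambda>i l. cnj (a i) * a l / sa m a)"
  have "(Tm m a z * Tm m a w) $$ (i,j) = (\<Sum>l\<in>{0..<m}. ((if i = l then 1 else 0) + (z - 1) * p i l) * ((if l = j then 1 else 0) + (w - 1) * p l j))"
    using i j by (simp add: Tm_def scalar_prod_def p_def)
  also have "\<dots> = (\<Sum>l\<in>{0..<m}. (if l = i then ((if l = j then 1 else 0) + (w - 1) * p l j) else 0)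
      + (if l = j then (z - 1) * p i l else 0) + (z - 1) * (w - 1) * (p i l * p l j))"
    by (rule sum.cong, auto simp: algebra_simps)
  also have "\<dots> = ((if i = j then 1 else 0) + (w - 1) * p i j) + (z - 1) * p i j + (z - 1) * (w - 1) * p i j"
  proof -
    have e: "(\<Sum>l\<in>{0..<m}. (z - 1) * (w - 1) * (p i l * p l j)) = (z - 1) * (w - 1) * p i j"
    proof -
      have "(\<Sum>l\<in>{0..<m}. (z - 1) * (w - 1) * (p i l * p l j)) = (z - 1) * (w - 1) * (\<Sum>l\<in>{0..<m}. p i l * p l j)"
        by (simp add: sum_distrib_left)
      also have "(\<Sum>l\<in>{0..<m}. p i l * p l j) = p i j" using sum_pp[OF s, of i j] by (simp add: p_def)
      finally show ?thesis .
    qed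
    show ?thesis using i j unfolding sum.distrib e by simp
  qed
  also have "\<dots> = Tm m a (z * w) $$ (i,j)" using i j by (simp add: Tm_def p_def add_divide_distrib[symmetric] algebra_simps)
  finally show "(Tm m a z * Tm m a w) $$ (i,j) = Tm m a (z * w) $$ (i,j)" .
qed auto

lemma Tm_one[simp]: "Tm m a 1 = 1\<^sub>m m"
  by (rule eq_matI, auto simp: Tm_def)

lemma ct_carrier[simp]: "dim_row (conj_transpose A) = dim_col A" "dim_col (conj_transpose A) = dim_row A"
  by (simp_all add: conj_transpose_def)

lemma ct_index[simp]: "i < dim_col A \<Longrightarrow> j < dim_row A \<Longrightarrow> conj_transpose A $$ (i,j) = cnj (A $$ (j,i))"
  by (simp add: conj_transpose_def)

lemma ct_mult:
  assumes "A \<in> carrier_mat a b" "B \<in> carrier_mat b c"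
  shows "conj_transpose (A * B) = conj_transpose B * conj_transpose A"
  using assms by (intro eq_matI, auto simp: scalar_prod_def conj_transpose_def intro!: sum.cong)

lemma ct_Tm: "conj_transpose (Tm m a z) = Tm m a (cnj z)"
  by (intro eq_matI, auto simp: Tm_def conj_transpose_def)

lemma ter_ct: "ter r m M C z = conj_transpose (evr r m M C (cnj (inverse z)))"
  by (intro eq_matI, auto simp: ter_def evr_def conj_transpose_def)

lemma evr_carrier[simp]: "evr r m M C z \<in> carrier_mat r m" and evr_dims[simp]:
   "dim_row (evr r m M C z) = r" "dim_col (evr r m M C z) = m"
  by (simp_all add: evr_def)
lemma ter_carrier[simp]: "ter r m M C z \<in> carrier_mat m r" and ter_dims[simp]:
   "dim_row (ter r m M C z) = m" "dim_col (ter r m M C z) = r"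
  by (simp_all add: ter_def)


lemma mdl:
  fixes u w :: "nat \<Rightarrow> complex"
  shows "det (mat m m (\<lambda>(i,j). (if i = j then 1 else 0) - u i * w j)) = 1 - (\<Sum>j\<in>{0..<m}. w j * u j)"
proof -
  define D where "D = mat m m (\<lambda>(i,j). (if i = j then 1 else 0) - u i * w j)"
  define U where "U = mat m 1 (\<lambda>(i,_). u i)"
  define W where "W = mat 1 m (\<lambda>(_,j). w j)"
  define c where "c = mat 1 1 (\<lambda>_. 1 - (\<Sum>j\<in>{0..<m}. w j * u j))"
  define I where "I = (1\<^sub>m m :: complex mat)"
  have D: "D \<in> carrier_mat m m" and U: "U \<in> carrier_mat m 1" and W: "W \<in> carrier_mat 1 m"
    and c: "c \<in> carrier_mat 1 1" and I: "I \<in> carrier_mat m m"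
    by (auto simp: D_def U_def W_def c_def I_def)
  have z1: "(0\<^sub>m m 1 :: complex mat) \<in> carrier_mat m 1" and z2: "(0\<^sub>m 1 m :: complex mat) \<in> carrier_mat 1 m" 
    and o1: "(1\<^sub>m 1 :: complex mat) \<in> carrier_mat 1 1" by auto
  have WU: "W * U + c = 1\<^sub>m 1"
    by (rule eq_matI, auto simp: W_def U_def c_def scalar_prod_def)
  have DUW: "D * I + U * W = I"
    by (rule eq_matI, auto simp: D_def U_def W_def I_def scalar_prod_def)
  define M1 where "M1 = four_block_mat I (0\<^sub>m m 1) W (1\<^sub>m 1)"
  define M2 where "M2 = four_block_mat I U (0\<^sub>m 1 m) c"
  define M3 where "M3 = four_block_mat D U (0\<^sub>m 1 m) (1\<^sub>m 1)"
  define M4 where "M4 = four_block_mat I (0\<^sub>m m 1) W (1\<^sub>m 1)"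
  have M12: "M1 * M2 = four_block_mat I U W (1\<^sub>m 1)"
    unfolding M1_def M2_def
    by (subst mult_four_block_mat[OF I z1 W o1 I U z2 c], insert I U W c WU, simp add: I_def)
  have M34: "M3 * M4 = four_block_mat I U W (1\<^sub>m 1)"
    unfolding M3_def M4_def
    by (subst mult_four_block_mat[OF D U z2 o1 I z1 W o1], insert I U W D DUW, simp add: I_def)
  have C1: "M1 \<in> carrier_mat (m+1) (m+1)" "M2 \<in> carrier_mat (m+1) (m+1)"
       "M3 \<in> carrier_mat (m+1) (m+1)" "M4 \<in> carrier_mat (m+1) (m+1)"
    unfolding M1_def M2_def M3_def M4_def using I D c by auto
  have d1: "det M1 = 1" unfolding M1_def
    by (subst det_four_block_mat_upper_right_zero[OF I refl W o1], simp add: I_def)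
  have d4: "det M4 = 1" unfolding M4_def
    by (subst det_four_block_mat_upper_right_zero[OF I refl W o1], simp add: I_def)
  have d2: "det M2 = 1 - (\<Sum>j\<in>{0..<m}. w j * u j)" unfolding M2_def
    by (subst det_four_block_mat_lower_left_zero[OF I U refl c], simp add: I_def det_single[OF c], simp add: c_def)
  have d3: "det M3 = det D" unfolding M3_def
    by (subst det_four_block_mat_lower_left_zero[OF D U refl o1], simp)
  have "det D = det (M3 * M4)" using det_mult[OF C1(3) C1(4)] d3 d4 by simp
  also have "\<dots> = det (M1 * M2)" using M12 M34 by simp
  also have "\<dots> = 1 - (\<Sum>j\<in>{0..<m}. w j * u j)" using det_mult[OF C1(1) C1(2)] d1 d2 by simp
  finally show ?thesis unfolding D_def .
qed

lemma det_Tm: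
  assumes s: "sa m a \<noteq> 0"
  shows "det (Tm m a z) = z"
proof -
  have eq: "Tm m a z = mat m m (\<lambda>(i,j). (if i = j then 1 else 0) - ((1 - z) * cnj (a i) / sa m a) * a j)"
    by (rule eq_matI, auto simp: Tm_def add_divide_distrib[symmetric] algebra_simps)
  have "det (Tm m a z) = 1 - (\<Sum>j\<in>{0..<m}. a j * ((1 - z) * cnj (a j) / sa m a))"
    unfolding eq by (rule mdl)
  also have "(\<Sum>j\<in>{0..<m}. a j * ((1 - z) * cnj (a j) / sa m a)) = ((1 - z) / sa m a) * sa m a"
    unfolding sa_def sum_distrib_left by (rule sum.cong, auto)
  also have "\<dots> = 1 - z" using s by simp
  finally show ?thesis by simp
qed


definition peel :: "nat \<Rightarrow> (nat \<Rightarrow> complex) \<Rightarrow> (nat \<Rightarrow> complex mat) \<Rightarrow> nat \<Rightarrow> complex mat" where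
  "peel m a C k = C k * Tm m a 0 + C (Suc k) * Pm m a"
definition unpeel :: "nat \<Rightarrow> (nat \<Rightarrow> complex) \<Rightarrow> (nat \<Rightarrow> complex mat) \<Rightarrow> nat \<Rightarrow> complex mat" where
  "unpeel m a B k = (if k = 0 then B 0 * Tm m a 0 else B k * Tm m a 0 + B (k - 1) * Pm m a)"

lemma Tm_entry: "l < m \<Longrightarrow> j < m \<Longrightarrow> Tm m a w $$ (l,j) = Tm m a 0 $$ (l,j) + w * Pm m a $$ (l,j)"
  by (simp add: Tm_def Pm_def add_divide_distrib[symmetric] algebra_simps)

lemma Pm_Pm: assumes s: "sa m a \<noteq> 0" shows "Pm m a * Pm m a = Pm m a"
  by (rule eq_matI, insert sum_pp[OF s], auto simp: Pm_def scalar_prod_def)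

lemma T0_eq: "Tm m a 0 = 1\<^sub>m m - Pm m a"
  by (rule eq_matI, auto simp: Tm_def Pm_def)

lemma T0_Pm: assumes s: "sa m a \<noteq> 0" shows "Tm m a 0 * Pm m a = 0\<^sub>m m m"
  unfolding T0_eq by (subst minus_mult_distrib_mat[OF one_carrier_mat Pm_carrier Pm_carrier], auto simp: Pm_Pm[OF s])

lemma Pm_T0: assumes s: "sa m a \<noteq> 0" shows "Pm m a * Tm m a 0 = 0\<^sub>m m m"
  unfolding T0_eq by (subst mult_minus_distrib_mat[OF Pm_carrier one_carrier_mat Pm_carrier], auto simp: Pm_Pm[OF s])

lemma T0_T0: assumes s: "sa m a \<noteq> 0" shows "Tm m a 0 * Tm m a 0 = Tm m a 0"
  using Tm_mult[OF s, of 0 0] by simp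

lemma T0_plus_Pm: "Tm m a 0 + Pm m a = 1\<^sub>m m"
  by (rule eq_matI, auto simp: Tm_def Pm_def)

lemma CT_carrier: "C \<in> carrier_mat r m \<Longrightarrow> C * Tm m a w \<in> carrier_mat r m"
  by (rule mult_carrier_mat[OF _ Tm_carrier])
lemma CP_carrier: "C \<in> carrier_mat r m \<Longrightarrow> C * Pm m a \<in> carrier_mat r m"
  by (rule mult_carrier_mat[OF _ Pm_carrier])

lemma peel_carrier: "(\<And>k. C k \<in> carrier_mat r m) \<Longrightarrow> peel m a C k \<in> carrier_mat r m"
  unfolding peel_def by (rule add_carrier_mat, rule CP_carrier, auto)

lemma unpeel_carrier: assumes C: "\<And>k. C k \<in> carrier_mat r m" shows "unpeel m a C k \<in> carrier_mat r m"
  unfolding unpeel_def using CT_carrier[OF C] CP_carrier[OF C] by (auto simp del: mult_carrier_mat)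

lemma unpeel_peel:
  assumes s: "sa m a \<noteq> 0" and C: "\<And>k. C k \<in> carrier_mat r m" and C0: "C 0 * Pm m a = 0\<^sub>m r m"
  shows "unpeel m a (peel m a C) k = C k"
proof -
  let ?T = "Tm m a 0" and ?P = "Pm m a"
  have T: "?T \<in> carrier_mat m m" and P: "?P \<in> carrier_mat m m" by auto
  have Ck: "\<And>k. C k * ?T \<in> carrier_mat r m" "\<And>k. C k * ?P \<in> carrier_mat r m"
    using CT_carrier[OF C] CP_carrier[OF C] by (auto simp del: mult_carrier_mat)
  have CTP: "C k * ?T + C k * ?P = C k" for k
  proof -
    have "C k * ?T + C k * ?P = C k * (?T + ?P)" using C[of k] by (simp add: mult_add_distrib_mat[OF C T P])
    also have "\<dots> = C k" using C[of k] by (simp add: T0_plus_Pm)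
    finally show ?thesis .
  qed
  have A: "peel m a C k * ?T = C k * ?T" for k
  proof -
    have "peel m a C k * ?T = (C k * ?T) * ?T + (C (Suc k) * ?P) * ?T"
      unfolding peel_def by (rule add_mult_distrib_mat[OF Ck(1)[of k] Ck(2)[of "Suc k"] T])
    also have "\<dots> = C k * (?T * ?T) + C (Suc k) * (?P * ?T)"
      using C by (simp add: assoc_mult_mat[of _ r m _ m _ m])
    also have "\<dots> = C k * ?T" using C by (simp add: T0_T0[OF s] Pm_T0[OF s] right_mult_zero_mat[of _ r m] right_add_zero_mat[OF Ck(1)])
    finally show ?thesis .
  qed
  have B: "peel m a C k * ?P = C (Suc k) * ?P" for k
  proof -
    have "peel m a C k * ?P = (C k * ?T) * ?P + (C (Suc k) * ?P) * ?P"
      unfolding peel_def by (rule add_mult_distrib_mat[OF Ck(1)[of k] Ck(2)[of "Suc k"] P])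
    also have "\<dots> = C k * (?T * ?P) + C (Suc k) * (?P * ?P)"
      using C by (simp add: assoc_mult_mat[of _ r m _ m _ m])
    also have "\<dots> = C (Suc k) * ?P" using C by (simp add: T0_Pm[OF s] Pm_Pm[OF s] right_mult_zero_mat[of _ r m] left_add_zero_mat[OF Ck(2)])
    finally show ?thesis .
  qed
  show ?thesis
  proof (cases k)
    case 0
    have "unpeel m a (peel m a C) k = C 0 * ?T" using A 0 by (simp add: unpeel_def)
    also have "\<dots> = C 0 * ?T + C 0 * ?P" using C0 C[of 0] by simp
    also have "\<dots> = C 0" by (rule CTP)
    finally show ?thesis using 0 by simp
  next
    case (Suc k')
    have "unpeel m a (peel m a C) k = C k * ?T + C k * ?P" using A B Suc by (simp add: unpeel_def)
    also have "\<dots> = C k" by (rule CTP)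
    finally show ?thesis .
  qed
qed


lemma sum_swap_aux:
  fixes f :: "'a \<Rightarrow> 'b \<Rightarrow> complex"
  shows "(\<Sum>l\<in>L. (\<Sum>k\<in>K. f k l) * g l) = (\<Sum>k\<in>K. \<Sum>l\<in>L. f k l * g l)"
proof -
  have "(\<Sum>l\<in>L. (\<Sum>k\<in>K. f k l) * g l) = (\<Sum>l\<in>L. \<Sum>k\<in>K. f k l * g l)" by (rule sum.cong, rule refl, rule sum_distrib_right)
  also have "\<dots> = (\<Sum>k\<in>K. \<Sum>l\<in>L. f k l * g l)" by (rule sum.swap)
  finally show ?thesis .
qed

lemma shift_sum:
  fixes p :: "nat \<Rightarrow> complex"
  assumes p0: "p 0 = 0" and pM: "p (Suc M) = 0" and z: "z \<noteq> 0"
  shows "(\<Sum>k\<le>M. p (Suc k) * z ^ k) = inverse z * (\<Sum>k\<le>M. p k * z ^ k)"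
proof -
  define X where "X = (\<Sum>k\<le>M. p (Suc k) * z ^ k)"
  have e1: "(\<Sum>k\<le>Suc M. p k * z ^ k) = p 0 * z ^ 0 + (\<Sum>k\<le>M. p (Suc k) * z ^ Suc k)"
    by (rule sum.atMost_Suc_shift)
  have e2: "(\<Sum>k\<le>M. p (Suc k) * z ^ Suc k) = z * X"
    unfolding X_def sum_distrib_left by (rule sum.cong, simp_all)
  have e3: "(\<Sum>k\<le>Suc M. p k * z ^ k) = (\<Sum>k\<le>M. p k * z ^ k)" using pM by simp
  have "z * X = (\<Sum>k\<le>M. p k * z ^ k)" using e1 e2 e3 p0 by simp
  hence "inverse z * (z * X) = inverse z * (\<Sum>k\<le>M. p k * z ^ k)" by simp
  thus ?thesis using z unfolding X_def by (simp add: mult.assoc[symmetric])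
qed

lemma peel_entry: assumes C: "\<And>k. C k \<in> carrier_mat r m" and i: "i < r" and j: "j < m"
  shows "peel m a C k $$ (i,j) = (C k * Tm m a 0) $$ (i,j) + (C (Suc k) * Pm m a) $$ (i,j)"
  unfolding peel_def using i j by (simp add: carrier_matD[OF C])

lemma evr_entry: "i < r \<Longrightarrow> j < m \<Longrightarrow> evr r m M C z $$ (i,j) = (\<Sum>k\<le>M. C k $$ (i,j) * z ^ k)"
  by (simp add: evr_def)

lemma mult_entry: "A \<in> carrier_mat r m \<Longrightarrow> B \<in> carrier_mat m n \<Longrightarrow> i < r \<Longrightarrow> j < n \<Longrightarrow>
   (A * B) $$ (i,j) = (\<Sum>l\<in>{0..<m}. A $$ (i,l) * B $$ (l,j))"
  by (simp add: scalar_prod_def)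

lemma evr_mult_Tm:
  assumes i: "i < r" and j: "j < m"
  shows "(evr r m M C z * Tm m a w) $$ (i,j) =
     (\<Sum>k\<le>M. (\<Sum>l\<in>{0..<m}. C k $$ (i,l) * Tm m a 0 $$ (l,j)) * z ^ k)
     + w * (\<Sum>k\<le>M. (\<Sum>l\<in>{0..<m}. C k $$ (i,l) * Pm m a $$ (l,j)) * z ^ k)"
proof -
  have "(evr r m M C z * Tm m a w) $$ (i,j) = (\<Sum>l\<in>{0..<m}. evr r m M C z $$ (i,l) * Tm m a w $$ (l,j))"
    by (rule mult_entry[OF evr_carrier Tm_carrier i j])
  also have "\<dots> = (\<Sum>l\<in>{0..<m}. (\<Sum>k\<le>M. C k $$ (i,l) * z ^ k) * (Tm m a 0 $$ (l,j) + w * Pm m a $$ (l,j)))"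
  proof (rule sum.cong, simp)
    fix l assume "l \<in> {0..<m}" hence l: "l < m" by simp
    show "evr r m M C z $$ (i,l) * Tm m a w $$ (l,j) = (\<Sum>k\<le>M. C k $$ (i,l) * z ^ k) * (Tm m a 0 $$ (l,j) + w * Pm m a $$ (l,j))"
      unfolding evr_entry[OF i l] Tm_entry[OF l j, of a w] by (rule refl)
  qed
  also have "\<dots> = (\<Sum>k\<le>M. \<Sum>l\<in>{0..<m}. C k $$ (i,l) * z ^ k * (Tm m a 0 $$ (l,j) + w * Pm m a $$ (l,j)))"
    by (rule sum_swap_aux)
  also have "\<dots> = (\<Sum>k\<le>M. (\<Sum>l\<in>{0..<m}. C k $$ (i,l) * Tm m a 0 $$ (l,j)) * z ^ k
       + w * ((\<Sum>l\<in>{0..<m}. C k $$ (i,l) * Pm m a $$ (l,j)) * z ^ k))"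
  proof (rule sum.cong, simp)
    fix k
    have "(\<Sum>l\<in>{0..<m}. C k $$ (i,l) * z ^ k * (Tm m a 0 $$ (l,j) + w * Pm m a $$ (l,j)))
       = (\<Sum>l\<in>{0..<m}. C k $$ (i,l) * Tm m a 0 $$ (l,j) * z ^ k + w * (C k $$ (i,l) * Pm m a $$ (l,j) * z ^ k))"
      by (rule sum.cong, simp, simp only: ring_distribs mult_ac)
    also have "\<dots> = (\<Sum>l\<in>{0..<m}. C k $$ (i,l) * Tm m a 0 $$ (l,j)) * z ^ k
       + w * ((\<Sum>l\<in>{0..<m}. C k $$ (i,l) * Pm m a $$ (l,j)) * z ^ k)"
      by (simp only: sum.distrib sum_distrib_left sum_distrib_right)
    finally show "(\<Sum>l\<in>{0..<m}. C k $$ (i,l) * z ^ k * (Tm m a 0 $$ (l,j) + w * Pm m a $$ (l,j)))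
       = (\<Sum>l\<in>{0..<m}. C k $$ (i,l) * Tm m a 0 $$ (l,j)) * z ^ k
       + w * ((\<Sum>l\<in>{0..<m}. C k $$ (i,l) * Pm m a $$ (l,j)) * z ^ k)" .
  qed
  also have "\<dots> = (\<Sum>k\<le>M. (\<Sum>l\<in>{0..<m}. C k $$ (i,l) * Tm m a 0 $$ (l,j)) * z ^ k)
     + w * (\<Sum>k\<le>M. (\<Sum>l\<in>{0..<m}. C k $$ (i,l) * Pm m a $$ (l,j)) * z ^ k)"
    by (simp only: sum.distrib sum_distrib_left)
  finally show ?thesis .
qed

lemma evr_peel:
  assumes C: "\<And>k. C k \<in> carrier_mat r m" and Z: "\<And>k. k > M \<Longrightarrow> C k = 0\<^sub>m r m"
    and C0: "C 0 * Pm m a = 0\<^sub>m r m" and z: "z \<noteq> 0"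
  shows "evr r m M (peel m a C) z = evr r m M C z * Tm m a (inverse z)"
proof (rule eq_matI)
  fix i j assume "i < dim_row (evr r m M C z * Tm m a (inverse z))" "j < dim_col (evr r m M C z * Tm m a (inverse z))"
  hence i: "i < r" and j: "j < m" by auto
  define q where "q = (\<lambda>k. \<Sum>l\<in>{0..<m}. C k $$ (i,l) * Tm m a 0 $$ (l,j))"
  define p where "p = (\<lambda>k. \<Sum>l\<in>{0..<m}. C k $$ (i,l) * Pm m a $$ (l,j))"
  have pk: "(C k * Pm m a) $$ (i,j) = p k" for k unfolding p_def by (rule mult_entry[OF C[of k] Pm_carrier i j])
  have qk: "(C k * Tm m a 0) $$ (i,j) = q k" for k unfolding q_def by (rule mult_entry[OF C[of k] Tm_carrier i j])
  have p0: "p 0 = 0" using pk[of 0] C0 i j by simp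
  have pM: "p (Suc M) = 0" using pk[of "Suc M"] Z[of "Suc M"] i j by simp
  have "evr r m M (peel m a C) z $$ (i,j) = (\<Sum>k\<le>M. (q k + p (Suc k)) * z ^ k)"
    unfolding evr_entry[OF i j] by (rule sum.cong, simp_all add: peel_entry[OF C i j] pk qk)
  also have "\<dots> = (\<Sum>k\<le>M. q k * z ^ k) + (\<Sum>k\<le>M. p (Suc k) * z ^ k)"
    by (simp add: sum.distrib algebra_simps)
  also have "\<dots> = (\<Sum>k\<le>M. q k * z ^ k) + inverse z * (\<Sum>k\<le>M. p k * z ^ k)"
    using shift_sum[OF p0 pM z] by simp
  also have "\<dots> = (evr r m M C z * Tm m a (inverse z)) $$ (i,j)"
    unfolding evr_mult_Tm[OF i j] p_def q_def by (rule refl)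
  finally show "evr r m M (peel m a C) z $$ (i,j) = (evr r m M C z * Tm m a (inverse z)) $$ (i,j)" .
qed auto

lemma evr_unpeel:
  assumes C: "\<And>k. C k \<in> carrier_mat r m" and Z: "\<And>k. k > M \<Longrightarrow> C k = 0\<^sub>m r m"
  shows "evr r m (Suc M) (unpeel m a C) z = evr r m M C z * Tm m a z"
proof (rule eq_matI)
  fix i j assume "i < dim_row (evr r m M C z * Tm m a z)" "j < dim_col (evr r m M C z * Tm m a z)"
  hence i: "i < r" and j: "j < m" by auto
  define q where "q = (\<lambda>k. \<Sum>l\<in>{0..<m}. C k $$ (i,l) * Tm m a 0 $$ (l,j))"
  define p where "p = (\<lambda>k. \<Sum>l\<in>{0..<m}. C k $$ (i,l) * Pm m a $$ (l,j))"
  have pk: "(C k * Pm m a) $$ (i,j) = p k" for k unfolding p_def by (rule mult_entry[OF C[of k] Pm_carrier i j])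
  have qk: "(C k * Tm m a 0) $$ (i,j) = q k" for k unfolding q_def by (rule mult_entry[OF C[of k] Tm_carrier i j])
  have qM: "q (Suc M) = 0" using qk[of "Suc M"] Z[of "Suc M"] i j by simp
  have "evr r m (Suc M) (unpeel m a C) z $$ (i,j) = (\<Sum>k\<le>Suc M. (if k = 0 then q 0 else q k + p (k - 1)) * z ^ k)"
    unfolding evr_entry[OF i j] by (rule sum.cong, auto simp: unpeel_def pk[symmetric] qk[symmetric] carrier_matD[OF C] i j)
  also have "\<dots> = q 0 + (\<Sum>k\<le>M. (q (Suc k) + p k) * z ^ Suc k)"
    by (subst sum.atMost_Suc_shift, simp)
  also have "\<dots> = (q 0 + (\<Sum>k\<le>M. q (Suc k) * z ^ Suc k)) + z * (\<Sum>k\<le>M. p k * z ^ k)"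
    by (simp add: sum.distrib sum_distrib_left algebra_simps)
  also have "q 0 + (\<Sum>k\<le>M. q (Suc k) * z ^ Suc k) = (\<Sum>k\<le>Suc M. q k * z ^ k)"
    by (subst sum.atMost_Suc_shift, simp)
  also have "\<dots> = (\<Sum>k\<le>M. q k * z ^ k)" using qM by simp
  also have "(\<Sum>k\<le>M. q k * z ^ k) + z * (\<Sum>k\<le>M. p k * z ^ k) = (evr r m M C z * Tm m a z) $$ (i,j)"
    unfolding evr_mult_Tm[OF i j] p_def q_def by (rule refl)
  finally show "evr r m (Suc M) (unpeel m a C) z $$ (i,j) = (evr r m M C z * Tm m a z) $$ (i,j)" .
qed auto


lemma ext0:
  fixes f g :: "complex \<Rightarrow> complex"
  assumes f: "isCont f 0" and g: "isCont g 0" and eq: "\<And>z. z \<noteq> 0 \<Longrightarrow> f z = g z"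
  shows "f 0 = g 0"
proof -
  have ft: "(f \<longlongrightarrow> f 0) (at 0)" using f by (simp add: isCont_def)
  have gt: "(g \<longlongrightarrow> g 0) (at 0)" using g by (simp add: isCont_def)
  have ev: "\<forall>\<^sub>F z in at 0. f z = g z" using eq by (auto simp: eventually_at_filter)
  have "(g \<longlongrightarrow> f 0) (at 0)" by (rule Lim_transform_eventually[OF ft ev])
  from tendsto_unique[OF _ this gt] show ?thesis by simp
qed

lemma isCont_det:
  fixes f :: "complex \<Rightarrow> nat \<Rightarrow> nat \<Rightarrow> complex"
  assumes "\<And>i j. i < n \<Longrightarrow> j < n \<Longrightarrow> isCont (\<lambda>z. f z i j) z0"
  shows "isCont (\<lambda>z. det (mat n n (\<lambda>(i,j). f z i j))) z0"
proof -
  have eq: "det (mat n n (\<lambda>(i,j). f z i j)) = (\<Sum>p\<in>{p. p permutes {0..<n}}. signof p * (\<Prod>i=0..<n. f z i (p i)))" for z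
    unfolding det_def'[OF mat_carrier]
    by (rule sum.cong, simp, rule arg_cong[where f = "\<lambda>x. _ * x"], rule prod.cong, simp,
        auto simp: permutes_in_image)
  show ?thesis unfolding eq
    by (intro continuous_intros assms, auto simp: permutes_in_image)
qed

lemma pow_inv: fixes z :: complex assumes "z \<noteq> 0" "k \<le> M"
  shows "z ^ M * inverse z ^ k = z ^ (M - k)"
proof -
  have "z ^ M = z ^ (M - k) * z ^ k" using assms by (simp add: power_add[symmetric])
  thus ?thesis using assms by (simp add: power_inverse field_simps)
qed

lemma sum_at0:
  fixes c :: "nat \<Rightarrow> complex"
  shows "(\<Sum>k\<le>M. c k * 0 ^ k) = c 0"
proof -
  have "(\<Sum>k\<le>M. c k * 0 ^ k) = (\<Sum>k\<le>M. if k = 0 then c k else 0)" by (rule sum.cong, auto)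
  also have "\<dots> = c 0" by (simp add: sum.delta)
  finally show ?thesis .
qed

lemma sum_at0_rev:
  fixes c :: "nat \<Rightarrow> complex"
  shows "(\<Sum>k\<le>M. c k * 0 ^ (M - k)) = c M"
proof -
  have "(\<Sum>k\<le>M. c k * 0 ^ (M - k)) = (\<Sum>k\<le>M. if k = M then c k else 0)" by (rule sum.cong, auto)
  also have "\<dots> = c M" by (simp add: sum.delta)
  finally show ?thesis .
qed

lemma ter_entry: "i < m \<Longrightarrow> j < r \<Longrightarrow> ter r m M C z $$ (i,j) = (\<Sum>k\<le>M. cnj (C k $$ (j,i)) * inverse z ^ k)"
  by (simp add: ter_def)

lemma zM_ter: assumes z: "z \<noteq> 0" and i: "i < m" and j: "j < r"
  shows "z ^ M * ter r m M C z $$ (i,j) = (\<Sum>k\<le>M. cnj (C k $$ (j,i)) * z ^ (M - k))"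
  unfolding ter_entry[OF i j] sum_distrib_left
  by (rule sum.cong, simp, simp add: pow_inv[OF z, symmetric] mult_ac)

lemma extract0:
  assumes C: "\<And>k. C k \<in> carrier_mat r m" and M: "M \<ge> 1"
    and para: "\<And>z. z \<noteq> 0 \<Longrightarrow> evr r m M C z * ter r m M C z = 1\<^sub>m r"
    and i: "i < r" and i': "i' < r"
  shows "(\<Sum>l\<in>{0..<m}. C 0 $$ (i,l) * cnj (C M $$ (i',l))) = 0"
proof -
  define f where "f z = (\<Sum>l\<in>{0..<m}. (\<Sum>k\<le>M. C k $$ (i,l) * z ^ k) * (\<Sum>k\<le>M. cnj (C k $$ (i',l)) * z ^ (M - k)))" for z :: complex
  define g where "g z = z ^ M * (if i = i' then 1 else 0)" for z :: complex
  have fg: "f z = g z" if z: "z \<noteq> 0" for z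
  proof -
    have "g z = z ^ M * (evr r m M C z * ter r m M C z) $$ (i,i')" using para[OF z] i i' by (simp add: g_def)
    also have "\<dots> = z ^ M * (\<Sum>l\<in>{0..<m}. evr r m M C z $$ (i,l) * ter r m M C z $$ (l,i'))"
      by (simp only: mult_entry[OF evr_carrier ter_carrier i i'])
    also have "\<dots> = (\<Sum>l\<in>{0..<m}. evr r m M C z $$ (i,l) * (z ^ M * ter r m M C z $$ (l,i')))"
      by (simp add: sum_distrib_left mult_ac)
    also have "\<dots> = f z" unfolding f_def
      by (rule sum.cong, simp, simp add: zM_ter[OF z _ i'] evr_entry[OF i])
    finally show ?thesis by simp
  qed
  have cf: "isCont f 0" unfolding f_def by (intro continuous_intros)
  have cg: "isCont g 0" unfolding g_def by (intro continuous_intros)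
  have e: "f 0 = g 0" by (rule ext0[OF cf cg fg])
  have "f 0 = (\<Sum>l\<in>{0..<m}. C 0 $$ (i,l) * cnj (C M $$ (i',l)))" unfolding f_def by (simp only: sum_at0 sum_at0_rev)
  moreover have "g 0 = 0" using M by (simp add: g_def)
  ultimately show ?thesis using e by simp
qed

lemma replace_col_evr: "i' < m \<Longrightarrow> replace_col (evr r m M C z) b i' = mat r m (\<lambda>(p,q). if q = i' then b $ p else (\<Sum>k\<le>M. C k $$ (p,q) * z ^ k))"
  by (rule eq_matI, auto simp: replace_col_def evr_def)


lemma top_zero:
  assumes C: "\<And>k. C k \<in> carrier_mat m m" and M: "M \<ge> 1"
    and para: "\<And>z. z \<noteq> 0 \<Longrightarrow> evr m m M C z * ter m m M C z = 1\<^sub>m m"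
    and dt: "\<And>z. z \<noteq> 0 \<Longrightarrow> det (evr m m M C z) = c * z ^ (M - 1)"
  shows "C M = 0\<^sub>m m m"
proof -
  have "det (evr m m M C 1) * det (ter m m M C 1) = 1"
    using det_mult[OF evr_carrier[of m m M C 1] ter_carrier[of m m M C 1]] para[of 1] by simp
  hence c: "c \<noteq> 0" using dt[of 1] by auto
  show ?thesis
  proof (rule eq_matI)
    fix j i assume "j < dim_row (0\<^sub>m m m :: complex mat)" "i < dim_col (0\<^sub>m m m :: complex mat)"
    hence j: "j < m" and i: "i < m" by auto
    define f where "f z = z * det (replace_col (evr m m M C z) (unit_vec m j) i)" for z :: complex
    define g where "g z = c * (\<Sum>k\<le>M. cnj (C k $$ (j,i)) * z ^ (M - k))" for z :: complex
    have fg: "f z = g z" if z: "z \<noteq> 0" for z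
    proof -
      let ?E = "evr m m M C z" and ?x = "col (ter m m M C z) j"
      have x: "?x \<in> carrier_vec m" by (rule col_carrier_vec[OF j ter_carrier])
      have "?E *\<^sub>v ?x = col (?E * ter m m M C z) j" by (rule col_mult2[OF evr_carrier ter_carrier j, symmetric])
      also have "\<dots> = unit_vec m j" unfolding para[OF z] by (rule col_one[OF j])
      finally have Ex: "?E *\<^sub>v ?x = unit_vec m j" .
      have "det (replace_col ?E (unit_vec m j) i) = ?x $ i * det ?E"
        using cramer_lemma_mat[OF evr_carrier[of m m M C z] x i] unfolding Ex .
      also have "\<dots> = ter m m M C z $$ (i,j) * (c * z ^ (M - 1))" 
        by (simp only: dt[OF z] index_col ter_dims i j)
      finally have "f z = z * (ter m m M C z $$ (i,j) * (c * z ^ (M - 1)))" by (simp add: f_def)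
      also have "\<dots> = c * ((z * z ^ (M - 1)) * ter m m M C z $$ (i,j))"
        by (simp only: mult_ac)
      also have "\<dots> = c * (z ^ M * ter m m M C z $$ (i,j))"
      proof -
        have "z * z ^ (M - 1) = z ^ M" using M by (cases M, auto)
        thus ?thesis by simp
      qed
      also have "\<dots> = g z" unfolding zM_ter[OF z i j] g_def by (rule refl)
      finally show ?thesis .
    qed
    have cf: "isCont f 0" unfolding f_def replace_col_evr[OF i]
    proof (intro continuous_intros)
      show "isCont (\<lambda>z. det (mat m m (\<lambda>(p,q). if q = i then unit_vec m j $ p else (\<Sum>k\<le>M. C k $$ (p,q) * z ^ k)))) 0"
      proof (rule isCont_det)
        fix p q show "isCont (\<lambda>z. if q = i then unit_vec m j $ p else (\<Sum>k\<le>M. C k $$ (p,q) * z ^ k)) 0"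
          by (cases "q = i", simp_all)
      qed
    qed
    have cg: "isCont g 0" unfolding g_def by (intro continuous_intros)
    have e: "f 0 = g 0" by (rule ext0[OF cf cg fg])
    have "f 0 = 0" by (simp add: f_def)
    moreover have "g 0 = c * cnj (C M $$ (j,i))" unfolding g_def by (simp only: sum_at0_rev)
    ultimately have "c * cnj (C M $$ (j,i)) = 0" using e by simp
    thus "C M $$ (j,i) = 0\<^sub>m m m $$ (j,i)" using c i j by simp
  qed (insert C[of M], auto)
qed


lemma ct_ct_w: "cnj (inverse (cnj (inverse (z::complex)))) = z"
  by (simp add: complex_cnj_inverse)

lemma ter_peel:
  assumes C: "\<And>k. C k \<in> carrier_mat r m" and Z: "\<And>k. k > M \<Longrightarrow> C k = 0\<^sub>m r m"
    and C0: "C 0 * Pm m a = 0\<^sub>m r m" and z: "z \<noteq> 0"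
  shows "ter r m M (peel m a C) z = Tm m a z * ter r m M C z"
proof -
  let ?w = "cnj (inverse z)"
  have w: "?w \<noteq> 0" using z by simp
  have "ter r m M (peel m a C) z = conj_transpose (evr r m M (peel m a C) ?w)" by (rule ter_ct)
  also have "\<dots> = conj_transpose (evr r m M C ?w * Tm m a (inverse ?w))" by (simp only: evr_peel[where C=C and r=r and m=m and M=M and a=a, OF C Z C0 w])
  also have "\<dots> = conj_transpose (Tm m a (inverse ?w)) * conj_transpose (evr r m M C ?w)"
    by (rule ct_mult[OF evr_carrier Tm_carrier])
  also have "\<dots> = Tm m a z * ter r m M C z" by (simp only: ct_Tm ter_ct[symmetric] ct_ct_w)
  finally show ?thesis .
qed

lemma ter_unpeel:
  assumes C: "\<And>k. C k \<in> carrier_mat r m" and Z: "\<And>k. k > M \<Longrightarrow> C k = 0\<^sub>m r m"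
  shows "ter r m (Suc M) (unpeel m a C) z = Tm m a (inverse z) * ter r m M C z"
proof -
  let ?w = "cnj (inverse z)"
  have "ter r m (Suc M) (unpeel m a C) z = conj_transpose (evr r m (Suc M) (unpeel m a C) ?w)" by (rule ter_ct)
  also have "\<dots> = conj_transpose (evr r m M C ?w * Tm m a ?w)" by (simp only: evr_unpeel[where C=C and r=r and m=m and M=M and a=a, OF C Z])
  also have "\<dots> = conj_transpose (Tm m a ?w) * conj_transpose (evr r m M C ?w)"
    by (rule ct_mult[OF evr_carrier Tm_carrier])
  also have "\<dots> = Tm m a (inverse z) * ter r m M C z" by (simp only: ct_Tm ter_ct[symmetric] complex_cnj_cnj)
  finally show ?thesis .
qed

lemma para_peel:
  assumes s: "sa m a \<noteq> 0" and C: "\<And>k. C k \<in> carrier_mat r m" and Z: "\<And>k. k > M \<Longrightarrow> C k = 0\<^sub>m r m"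
    and C0: "C 0 * Pm m a = 0\<^sub>m r m" and z: "z \<noteq> 0"
    and para: "evr r m M C z * ter r m M C z = 1\<^sub>m r"
  shows "evr r m M (peel m a C) z * ter r m M (peel m a C) z = 1\<^sub>m r"
proof -
  let ?E = "evr r m M C z" and ?T = "ter r m M C z"
  have "evr r m M (peel m a C) z * ter r m M (peel m a C) z = (?E * Tm m a (inverse z)) * (Tm m a z * ?T)"
    by (simp only: evr_peel[where C=C and r=r and m=m and M=M and a=a, OF C Z C0 z] ter_peel[where C=C and r=r and m=m and M=M and a=a, OF C Z C0 z])
  also have "\<dots> = ?E * ((Tm m a (inverse z) * Tm m a z) * ?T)"
    by (simp add: assoc_mult_mat[OF evr_carrier Tm_carrier mult_carrier_mat[OF Tm_carrier ter_carrier]] assoc_mult_mat[OF Tm_carrier Tm_carrier ter_carrier])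
  also have "\<dots> = ?E * ?T" using z by (simp add: Tm_mult[OF s])
  finally show ?thesis using para by simp
qed

lemma para_unpeel:
  assumes s: "sa m a \<noteq> 0" and C: "\<And>k. C k \<in> carrier_mat r m" and Z: "\<And>k. k > M \<Longrightarrow> C k = 0\<^sub>m r m"
    and z: "z \<noteq> 0"
    and para: "evr r m M C z * ter r m M C z = 1\<^sub>m r"
  shows "evr r m (Suc M) (unpeel m a C) z * ter r m (Suc M) (unpeel m a C) z = 1\<^sub>m r"
proof -
  let ?E = "evr r m M C z" and ?T = "ter r m M C z"
  have "evr r m (Suc M) (unpeel m a C) z * ter r m (Suc M) (unpeel m a C) z = (?E * Tm m a z) * (Tm m a (inverse z) * ?T)"
    by (simp only: evr_unpeel[where C=C and r=r and m=m and M=M and a=a, OF C Z] ter_unpeel[where C=C and r=r and m=m and M=M and a=a, OF C Z])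
  also have "\<dots> = ?E * ((Tm m a z * Tm m a (inverse z)) * ?T)"
    by (simp add: assoc_mult_mat[OF evr_carrier Tm_carrier mult_carrier_mat[OF Tm_carrier ter_carrier]] assoc_mult_mat[OF Tm_carrier Tm_carrier ter_carrier])
  also have "\<dots> = ?E * ?T" using z by (simp add: Tm_mult[OF s])
  finally show ?thesis using para by simp
qed

lemma evr_drop:
  assumes "D (Suc n) = 0\<^sub>m r m"
  shows "evr r m (Suc n) D z = evr r m n D z" "ter r m (Suc n) D z = ter r m n D z"
  using assms by (auto intro!: eq_matI simp: evr_def ter_def)

lemma evr_deg0: "C 0 \<in> carrier_mat r m \<Longrightarrow> evr r m 0 C z = C 0"
  by (rule eq_matI, auto simp: evr_def)

lemma ter_deg0: "C 0 \<in> carrier_mat r m \<Longrightarrow> ter r m 0 C z = conj_transpose (C 0)"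
  by (rule eq_matI, auto simp: ter_def)

lemma isCont_det_evr: "isCont (\<lambda>z. det (evr m m n D z)) z0"
  unfolding evr_def by (rule isCont_det, intro continuous_intros)

lemma row0_mult:
  assumes A: "A \<in> carrier_mat r m" and A': "A' \<in> carrier_mat r' m" and r: "0 < r" "0 < r'"
    and eq: "\<And>l. l < m \<Longrightarrow> A $$ (0,l) = A' $$ (0,l)" and B: "B \<in> carrier_mat m n" and j: "j < n"
  shows "(A * B) $$ (0,j) = (A' * B) $$ (0,j)"
  unfolding mult_entry[OF A B r(1) j] mult_entry[OF A' B r(2) j] by (rule sum.cong, auto simp: eq)

lemma unpeel_entry:
  assumes C: "\<And>k. C k \<in> carrier_mat r m" and i: "i < r" and j: "j < m"
  shows "unpeel m a C k $$ (i,j) = (C k * Tm m a 0) $$ (i,j) + (if k = 0 then 0 else (C (k - 1) * Pm m a) $$ (i,j))"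
  unfolding unpeel_def using i j by (simp add: carrier_matD[OF C])

lemma sa_nz:
  assumes "j < m" "a j \<noteq> 0" shows "sa m a \<noteq> 0"
proof -
  have "sa m a = (\<Sum>j\<in>{0..<m}. of_real ((cmod (a j))\<^sup>2))" unfolding sa_def
    by (rule sum.cong, simp, simp only: complex_norm_square)
  also have "\<dots> = of_real (\<Sum>j\<in>{0..<m}. (cmod (a j))\<^sup>2)" by simp
  finally have e: "sa m a = of_real (\<Sum>j\<in>{0..<m}. (cmod (a j))\<^sup>2)" .
  have "(\<Sum>j\<in>{0..<m}. (cmod (a j))\<^sup>2) > 0"
    using assms by (intro sum_pos2[of _ j], auto)
  thus ?thesis unfolding e by (metis of_real_eq_0_iff less_irrefl)
qed

lemma row_T0_zero:
  assumes s: "sa m a \<noteq> 0" and X: "X \<in> carrier_mat r m" and i: "i < r" and Xa: "\<And>l. l < m \<Longrightarrow> X $$ (i,l) = a l" and j: "j < m"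
  shows "(X * Tm m a 0) $$ (i,j) = 0"
proof -
  have "(X * Tm m a 0) $$ (i,j) = (\<Sum>l\<in>{0..<m}. (if l = j then a l else 0) - (a j / sa m a) * (a l * cnj (a l)))"
    unfolding mult_entry[OF X Tm_carrier i j] by (rule sum.cong, auto simp: Xa Tm_def j field_simps)
  also have "\<dots> = (\<Sum>l\<in>{0..<m}. (if l = j then a l else 0)) - (a j / sa m a) * (\<Sum>l\<in>{0..<m}. a l * cnj (a l))"
    by (simp only: sum_subtractf sum_distrib_left)
  also have "\<dots> = 0" using s j by (simp add: sa_def[symmetric])
  finally show ?thesis .
qed


definition PU :: "nat \<Rightarrow> nat \<Rightarrow> (nat \<Rightarrow> complex mat) \<Rightarrow> bool" where
  "PU m N C \<longleftrightarrow> (\<forall>k. C k \<in> carrier_mat m m) \<and> (\<forall>k>N. C k = 0\<^sub>m m m) \<and>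
     (\<forall>z. z \<noteq> 0 \<longrightarrow> evr m m N C z * ter m m N C z = 1\<^sub>m m) \<and> (\<exists>c. \<forall>z. det (evr m m N C z) = c * z ^ N)"

definition rowa :: "nat \<Rightarrow> complex mat \<Rightarrow> nat \<Rightarrow> complex" where
  "rowa m X = (\<lambda>j. if j < m then X $$ (0,j) else 0)"

lemma peel_step:
  assumes P: "PU m (Suc n) C" and j0: "j0 < m" and nz: "C (Suc n) $$ (0,j0) \<noteq> 0"
  defines "a \<equiv> rowa m (C (Suc n))"
  shows "C 0 * Pm m a = 0\<^sub>m m m" "PU m n (peel m a C)" "evr m m n (peel m a C) 1 = evr m m (Suc n) C 1"
    "peel m a C (Suc n) = 0\<^sub>m m m"
proof -
  from P have C: "\<And>k. C k \<in> carrier_mat m m" and Z: "\<And>k. k > Suc n \<Longrightarrow> C k = 0\<^sub>m m m"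
    and para: "\<And>z. z \<noteq> 0 \<Longrightarrow> evr m m (Suc n) C z * ter m m (Suc n) C z = 1\<^sub>m m"
    unfolding PU_def by auto
  from P obtain c where dt: "\<And>z. det (evr m m (Suc n) C z) = c * z ^ Suc n" unfolding PU_def by auto
  have s: "sa m a \<noteq> 0" using j0 nz by (intro sa_nz[of j0], auto simp: a_def rowa_def)
  have m0: "0 < m" using j0 by simp
  show C0: "C 0 * Pm m a = 0\<^sub>m m m"
  proof (rule eq_matI)
    fix i j assume "i < dim_row (0\<^sub>m m m :: complex mat)" "j < dim_col (0\<^sub>m m m :: complex mat)"
    hence i: "i < m" and j: "j < m" by auto
    have "(C 0 * Pm m a) $$ (i,j) = (\<Sum>l\<in>{0..<m}. (a j / sa m a) * (C 0 $$ (i,l) * cnj (C (Suc n) $$ (0,l))))"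
      unfolding mult_entry[OF C Pm_carrier i j] by (rule sum.cong, auto simp: Pm_def a_def rowa_def j)
    also have "\<dots> = (a j / sa m a) * (\<Sum>l\<in>{0..<m}. C 0 $$ (i,l) * cnj (C (Suc n) $$ (0,l)))"
      by (simp only: sum_distrib_left)
    also have "\<dots> = 0" using extract0[where C=C and r=m and m=m and M="Suc n", OF C _ para i m0] by simp
    finally show "(C 0 * Pm m a) $$ (i,j) = 0\<^sub>m m m $$ (i,j)" using i j by simp
  qed (insert C[of 0], auto)
  define D where "D = peel m a C"
  have DC: "\<And>k. D k \<in> carrier_mat m m" unfolding D_def by (rule peel_carrier[OF C])
  have DZ: "\<And>k. k > Suc n \<Longrightarrow> D k = 0\<^sub>m m m" unfolding D_def peel_def using Z by simp
  have evD: "\<And>z. z \<noteq> 0 \<Longrightarrow> evr m m (Suc n) D z = evr m m (Suc n) C z * Tm m a (inverse z)"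
    unfolding D_def by (rule evr_peel[where C=C and r=m and m=m and M="Suc n" and a=a, OF C Z C0])
  have paraD: "\<And>z. z \<noteq> 0 \<Longrightarrow> evr m m (Suc n) D z * ter m m (Suc n) D z = 1\<^sub>m m"
    unfolding D_def by (rule para_peel[where C=C and r=m and m=m and M="Suc n" and a=a, OF s C Z C0 _ para])
  have detD: "det (evr m m (Suc n) D z) = c * z ^ (Suc n - 1)" if z: "z \<noteq> 0" for z
  proof -
    have "det (evr m m (Suc n) D z) = det (evr m m (Suc n) C z) * det (Tm m a (inverse z))"
      unfolding evD[OF z] by (rule det_mult[OF evr_carrier Tm_carrier])
    also have "\<dots> = c * z ^ Suc n * inverse z" by (simp only: dt det_Tm[OF s])
    also have "\<dots> = c * z ^ (Suc n - 1)" using z by (simp add: field_simps)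
    finally show ?thesis .
  qed
  have top: "D (Suc n) = 0\<^sub>m m m" by (rule top_zero[OF DC _ paraD detD], auto)
  thus "peel m a C (Suc n) = 0\<^sub>m m m" unfolding D_def .
  note drop = evr_drop[of D n m m, OF top]
  have ev1: "evr m m n D 1 = evr m m (Suc n) C 1"
    unfolding drop(1)[symmetric] evD[of 1, simplified] by simp
  thus "evr m m n (peel m a C) 1 = evr m m (Suc n) C 1" unfolding D_def .
  have det_nz: "det (evr m m n D z) = c * z ^ n" if z: "z \<noteq> 0" for z
    using detD[OF z] unfolding drop by simp
  have det_all: "det (evr m m n D z) = c * z ^ n" for z
  proof (cases "z = 0")
    case True
    have "(\<lambda>z. det (evr m m n D z)) 0 = (\<lambda>z. c * z ^ n) 0"
      by (rule ext0[OF isCont_det_evr _ det_nz], intro continuous_intros)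
    thus ?thesis using True by simp
  qed (rule det_nz)
  show "PU m n (peel m a C)" unfolding D_def[symmetric] PU_def
  proof (intro conjI allI impI)
    fix k show "D k \<in> carrier_mat m m" by (rule DC)
  next
    fix k assume "n < k"
    thus "D k = 0\<^sub>m m m" using top DZ by (cases "k = Suc n", auto)
  next
    fix z :: complex assume "z \<noteq> 0"
    thus "evr m m n D z * ter m m n D z = 1\<^sub>m m" using paraD unfolding drop by auto
  next
    show "\<exists>c. \<forall>z. det (evr m m n D z) = c * z ^ n" using det_all by blast
  qed
qed

lemma uniq:
  "PU m n C \<Longrightarrow> PU m n C' \<Longrightarrow> evr m m n C 1 = evr m m n C' 1 \<Longrightarrow>
   (\<forall>k j. j < m \<longrightarrow> C k $$ (0,j) = C' k $$ (0,j)) \<Longrightarrow> (\<exists>j<m. C n $$ (0,j) \<noteq> 0) \<Longrightarrow> C = C'"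
proof (induction n arbitrary: C C')
  case 0
  note pr = "0.prems"
  from pr(1,2) have C: "\<And>k. C k \<in> carrier_mat m m" "\<And>k. k > 0 \<Longrightarrow> C k = 0\<^sub>m m m"
    and C': "\<And>k. C' k \<in> carrier_mat m m" "\<And>k. k > 0 \<Longrightarrow> C' k = 0\<^sub>m m m" unfolding PU_def by auto
  show ?case
  proof
    fix k show "C k = C' k"
    proof (cases k)
      case 0
      have "C 0 = C' 0" using pr(3) unfolding evr_deg0[where C=C and r=m and m=m and z=1, OF C(1)]
        evr_deg0[where C=C' and r=m and m=m and z=1, OF C'(1)] .
      thus ?thesis using 0 by simp
    qed (auto simp: C(2) C'(2))
  qed
next
  case (Suc n)
  from Suc.prems(5) obtain j0 where j0: "j0 < m" and nz: "C (Suc n) $$ (0,j0) \<noteq> 0" by auto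
  have nz': "C' (Suc n) $$ (0,j0) \<noteq> 0" using nz j0 Suc.prems(4) by auto
  have aeq: "rowa m (C (Suc n)) = rowa m (C' (Suc n))" using Suc.prems(4) by (auto simp: rowa_def)
  define a where "a = rowa m (C (Suc n))"
  note S = peel_step[OF Suc.prems(1) j0 nz, folded a_def]
  note S' = peel_step[OF Suc.prems(2) j0 nz', folded aeq, folded a_def]
  have C: "\<And>k. C k \<in> carrier_mat m m" and C': "\<And>k. C' k \<in> carrier_mat m m"
    using Suc.prems(1,2) unfolding PU_def by auto
  have s: "sa m a \<noteq> 0" using j0 nz by (intro sa_nz[of j0], auto simp: a_def rowa_def)
  have m0: "0 < m" using j0 by simp
  have rows: "\<forall>k j. j < m \<longrightarrow> peel m a C k $$ (0,j) = peel m a C' k $$ (0,j)"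
  proof (intro allI impI)
    fix k j assume j: "j < m"
    show "peel m a C k $$ (0,j) = peel m a C' k $$ (0,j)"
      unfolding peel_entry[OF C m0 j] peel_entry[OF C' m0 j]
      using row0_mult[OF C C' m0 m0 _ Tm_carrier j, of k k] row0_mult[OF C C' m0 m0 _ Pm_carrier j, of "Suc k" "Suc k"]
        Suc.prems(4) by auto
  qed
  have nzD: "\<exists>j<m. peel m a C n $$ (0,j) \<noteq> 0"
  proof (rule ccontr)
    assume "\<not> ?thesis"
    hence z: "\<And>j. j < m \<Longrightarrow> peel m a C n $$ (0,j) = 0" by auto
    have "C (Suc n) $$ (0,j0) = unpeel m a (peel m a C) (Suc n) $$ (0,j0)"
      using unpeel_peel[where C=C and r=m and m=m and a=a, OF s C S(1)] by simp
    also have "\<dots> = (peel m a C (Suc n) * Tm m a 0) $$ (0,j0) + (peel m a C n * Pm m a) $$ (0,j0)"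
      using unpeel_entry[OF peel_carrier[OF C] m0 j0] by simp
    also have "\<dots> = 0" unfolding S(4) mult_entry[OF peel_carrier[OF C] Pm_carrier m0 j0]
      using m0 j0 z by simp
    finally show False using nz by simp
  qed
  have "peel m a C = peel m a C'"
    by (rule Suc.IH[OF S(2) S'(2) _ rows nzD], simp only: S(3) S'(3) Suc.prems(3))
  show ?case
  proof
    fix k
    have "C k = unpeel m a (peel m a C) k" using unpeel_peel[where C=C and r=m and m=m and a=a, OF s C S(1)] by simp
    also have "\<dots> = unpeel m a (peel m a C') k" using \<open>peel m a C = peel m a C'\<close> by simp
    also have "\<dots> = C' k" using unpeel_peel[where C=C' and r=m and m=m and a=a, OF s C' S'(1)] by simp
    finally show "C k = C' k" .
  qed
qed


lemma mpoly_eval_evr: "mpoly_eval m N C z = evr m m N C z"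
  by (simp add: mpoly_eval_def evr_def)
lemma mpoly_tilde_ter: "mpoly_tilde_eval m N C z = ter m m N C z"
  by (simp add: mpoly_tilde_eval_def ter_def)

lemma WM_iff: "WM m n F C \<longleftrightarrow> (\<forall>k. C k \<in> carrier_mat m m) \<and>
     (\<forall>k\<le>n. \<forall>i<m. \<forall>j<m. C k $$ (i,j) \<in> F) \<and> (\<forall>k>n. C k = 0\<^sub>m m m) \<and> C n \<noteq> 0\<^sub>m m m \<and>
     (\<forall>z. z \<noteq> 0 \<longrightarrow> evr m m n C z * ter m m n C z = 1\<^sub>m m) \<and> (\<exists>c. \<forall>z. det (evr m m n C z) = c * z ^ n)"
  unfolding WM_def mpoly_eval_evr mpoly_tilde_ter ..

lemma WM_PU: "WM m n F C \<Longrightarrow> PU m n C"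
  unfolding WM_iff PU_def by auto

context
  fixes F :: "complex set"
  assumes F: "conj_closed_subfield F"
begin

lemma F0: "0 \<in> F" and F1: "1 \<in> F" and Fadd: "x \<in> F \<Longrightarrow> y \<in> F \<Longrightarrow> x + y \<in> F"
  and Fmult: "x \<in> F \<Longrightarrow> y \<in> F \<Longrightarrow> x * y \<in> F" and Fneg: "x \<in> F \<Longrightarrow> - x \<in> F"
  and Fcnj: "x \<in> F \<Longrightarrow> cnj x \<in> F"
  using F unfolding conj_closed_subfield_def by auto

lemma Finv: "x \<in> F \<Longrightarrow> inverse x \<in> F"
  using F unfolding conj_closed_subfield_def by (cases "x = 0", auto)

lemma Fminus: assumes "x \<in> F" "y \<in> F" shows "x - y \<in> F"
proof -
  have "x + - y \<in> F" by (rule Fadd[OF assms(1) Fneg[OF assms(2)]])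
  thus ?thesis by simp
qed

lemma Fdiv: assumes "x \<in> F" "y \<in> F" shows "x / y \<in> F"
proof -
  have "x * inverse y \<in> F" by (rule Fmult[OF assms(1) Finv[OF assms(2)]])
  thus ?thesis by (simp add: divide_inverse)
qed

lemma Fsum: "(\<And>x. x \<in> S \<Longrightarrow> f x \<in> F) \<Longrightarrow> sum f S \<in> F"
proof (induction S rule: infinite_finite_induct)
  case (infinite A) thus ?case using F0 by simp
next
  case empty thus ?case using F0 by simp
next
  case (insert x A)
  have 1: "f x \<in> F" using insert.prems by simp
  have 2: "sum f A \<in> F" using insert.IH insert.prems by simp
  show ?case unfolding sum.insert[OF insert.hyps] by (rule Fadd[OF 1 2])
qed

lemma F_mult_mat:
  assumes A: "A \<in> carrier_mat r m" and B: "B \<in> carrier_mat m n"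
    and AF: "\<And>l. l < m \<Longrightarrow> A $$ (i,l) \<in> F" and BF: "\<And>l. l < m \<Longrightarrow> B $$ (l,j) \<in> F"
    and i: "i < r" and j: "j < n"
  shows "(A * B) $$ (i,j) \<in> F"
  unfolding mult_entry[OF A B i j] by (rule Fsum, auto intro!: Fmult AF BF)

lemma F_sa: "(\<And>l. l < m \<Longrightarrow> a l \<in> F) \<Longrightarrow> sa m a \<in> F"
  unfolding sa_def by (rule Fsum, auto intro!: Fmult Fcnj)

lemma F_Pm: "(\<And>l. l < m \<Longrightarrow> a l \<in> F) \<Longrightarrow> i < m \<Longrightarrow> j < m \<Longrightarrow> Pm m a $$ (i,j) \<in> F"
  unfolding Pm_def by (auto intro!: Fdiv Fmult Fcnj F_sa)

lemma F_T0: assumes aF: "\<And>l. l < m \<Longrightarrow> a l \<in> F" and i: "i < m" and j: "j < m"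
  shows "Tm m a 0 $$ (i,j) \<in> F"
proof -
  have e: "Tm m a 0 $$ (i,j) = (if i = j then 1 else 0) + (0 - 1) * (cnj (a i) * a j / sa m a)"
    using i j by (simp add: Tm_def)
  have 1: "(if i = j then 1 else 0) \<in> F" using F0 F1 by simp
  have 2: "(0 - 1) * (cnj (a i) * a j / sa m a) \<in> F"
    by (rule Fmult[OF Fminus[OF F0 F1] Fdiv[OF Fmult[OF Fcnj[OF aF[OF i]] aF[OF j]] F_sa[OF aF]]])
  show ?thesis unfolding e by (rule Fadd[OF 1 2])
qed

end


lemma exist:
  fixes F :: "complex set" and V :: "complex mat"
  assumes F: "conj_closed_subfield F" and V: "V \<in> carrier_mat m m"
    and VF: "\<And>i j. i < m \<Longrightarrow> j < m \<Longrightarrow> V $$ (i,j) \<in> F" and VU: "V * conj_transpose V = 1\<^sub>m m"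
  shows "\<And>R j0. (\<And>k. R k \<in> carrier_mat 1 m) \<Longrightarrow> (\<And>k. k > n \<Longrightarrow> R k = 0\<^sub>m 1 m) \<Longrightarrow>
    (\<And>k j. j < m \<Longrightarrow> R k $$ (0,j) \<in> F) \<Longrightarrow> j0 < m \<Longrightarrow> R n $$ (0,j0) \<noteq> 0 \<Longrightarrow>
    (\<And>z. z \<noteq> 0 \<Longrightarrow> evr 1 m n R z * ter 1 m n R z = 1\<^sub>m 1) \<Longrightarrow>
    (\<And>j. j < m \<Longrightarrow> evr 1 m n R 1 $$ (0,j) = V $$ (0,j)) \<Longrightarrow>
    \<exists>C. WM m n F C \<and> evr m m n C 1 = V \<and> (\<forall>k j. j < m \<longrightarrow> C k $$ (0,j) = R k $$ (0,j))"
proof (induction n)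
  case 0
  fix R j0
  assume RC: "\<And>k. R k \<in> carrier_mat 1 m" and RZ: "\<And>k. k > 0 \<Longrightarrow> R k = 0\<^sub>m 1 m"
    and j0: "j0 < m" and nz: "R 0 $$ (0,j0) \<noteq> 0"
    and at1: "\<And>j. j < m \<Longrightarrow> evr 1 m 0 R 1 $$ (0,j) = V $$ (0,j)"
  define C where "C = (\<lambda>k::nat. if k = 0 then V else 0\<^sub>m m m)"
  have CC: "\<And>k. C k \<in> carrier_mat m m" using V by (simp add: C_def)
  have ev: "evr m m 0 C z = V" for z using evr_deg0[where C=C and r=m and m=m and z=z, OF CC] by (simp add: C_def)
  have te: "ter m m 0 C z = conj_transpose V" for z using ter_deg0[where C=C and r=m and m=m and z=z, OF CC] by (simp add: C_def)
  have R0: "evr 1 m 0 R 1 = R 0" by (rule evr_deg0[OF RC])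
  have V0: "V $$ (0,j) = R 0 $$ (0,j)" if "j < m" for j using at1[OF that] unfolding R0 by simp
  have Vnz: "V \<noteq> 0\<^sub>m m m"
  proof
    assume "V = 0\<^sub>m m m"
    hence "V $$ (0,j0) = 0" using j0 by simp
    thus False using V0[OF j0] nz by simp
  qed
  have "WM m 0 F C" unfolding WM_iff
  proof (intro conjI allI impI)
    fix k show "C k \<in> carrier_mat m m" by (rule CC)
  next
    fix k i j assume "k \<le> (0::nat)" "i < m" "j < m"
    thus "C k $$ (i,j) \<in> F" using VF by (simp add: C_def)
  next
    fix k :: nat assume "0 < k" thus "C k = 0\<^sub>m m m" by (simp add: C_def)
  next
    show "C 0 \<noteq> 0\<^sub>m m m" using Vnz by (simp add: C_def)
  next
    fix z :: complex assume "z \<noteq> 0"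
    show "evr m m 0 C z * ter m m 0 C z = 1\<^sub>m m" unfolding ev te by (rule VU)
  next
    show "\<exists>c. \<forall>z. det (evr m m 0 C z) = c * z ^ 0" unfolding ev by simp
  qed
  moreover have "evr m m 0 C 1 = V" by (rule ev)
  moreover have "\<forall>k j. j < m \<longrightarrow> C k $$ (0,j) = R k $$ (0,j)"
  proof (intro allI impI)
    fix k j assume j: "j < m"
    show "C k $$ (0,j) = R k $$ (0,j)"
    proof (cases "k = 0")
      case True thus ?thesis using V0[OF j] by (simp add: C_def)
    next
      case False
      hence "R k = 0\<^sub>m 1 m" using RZ by simp
      thus ?thesis using False j by (simp add: C_def)
    qed
  qed
  ultimately show "\<exists>C. WM m 0 F C \<and> evr m m 0 C 1 = V \<and> (\<forall>k j. j < m \<longrightarrow> C k $$ (0,j) = R k $$ (0,j))" by blast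
next
  case (Suc n)
  fix R j0
  assume RC: "\<And>k. R k \<in> carrier_mat 1 m" and RZ: "\<And>k. k > Suc n \<Longrightarrow> R k = 0\<^sub>m 1 m"
    and RF: "\<And>k j. j < m \<Longrightarrow> R k $$ (0,j) \<in> F"
    and j0: "j0 < m" and nz: "R (Suc n) $$ (0,j0) \<noteq> 0"
    and para: "\<And>z. z \<noteq> 0 \<Longrightarrow> evr 1 m (Suc n) R z * ter 1 m (Suc n) R z = 1\<^sub>m 1"
    and at1: "\<And>j. j < m \<Longrightarrow> evr 1 m (Suc n) R 1 $$ (0,j) = V $$ (0,j)"
  define a where "a = rowa m (R (Suc n))"
  have aF: "\<And>l. l < m \<Longrightarrow> a l \<in> F" using RF by (simp add: a_def rowa_def)
  have s: "sa m a \<noteq> 0" using j0 nz by (intro sa_nz[of j0], auto simp: a_def rowa_def)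
  have m0: "0 < m" using j0 by simp
  have one: "(0::nat) < 1" by simp
  have R0P: "R 0 * Pm m a = 0\<^sub>m 1 m"
  proof (rule eq_matI)
    fix i j assume "i < dim_row (0\<^sub>m 1 m :: complex mat)" "j < dim_col (0\<^sub>m 1 m :: complex mat)"
    hence i: "i = 0" and j: "j < m" by auto
    have "(R 0 * Pm m a) $$ (0,j) = (\<Sum>l\<in>{0..<m}. (a j / sa m a) * (R 0 $$ (0,l) * cnj (R (Suc n) $$ (0,l))))"
      unfolding mult_entry[OF RC Pm_carrier one j] by (rule sum.cong, auto simp: Pm_def a_def rowa_def j)
    also have "\<dots> = (a j / sa m a) * (\<Sum>l\<in>{0..<m}. R 0 $$ (0,l) * cnj (R (Suc n) $$ (0,l)))"
      by (simp only: sum_distrib_left)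
    also have "(\<Sum>l\<in>{0..<m}. R 0 $$ (0,l) * cnj (R (Suc n) $$ (0,l))) = 0"
      by (rule extract0[where C=R and r=1 and m=m and M="Suc n", OF RC _ para one one], simp)
    finally show "(R 0 * Pm m a) $$ (i,j) = 0\<^sub>m 1 m $$ (i,j)" using i j by simp
  qed (insert RC[of 0], auto)
  define R' where "R' = peel m a R"
  have R'C: "\<And>k. R' k \<in> carrier_mat 1 m" unfolding R'_def by (rule peel_carrier[OF RC])
  have R'top: "R' (Suc n) = 0\<^sub>m 1 m"
  proof (rule eq_matI)
    fix i j assume "i < dim_row (0\<^sub>m 1 m :: complex mat)" "j < dim_col (0\<^sub>m 1 m :: complex mat)"
    hence i: "i = 0" and j: "j < m" by auto
    have z2: "R (Suc (Suc n)) = 0\<^sub>m 1 m" by (rule RZ, simp)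
    have "R' (Suc n) $$ (0,j) = (R (Suc n) * Tm m a 0) $$ (0,j) + (R (Suc (Suc n)) * Pm m a) $$ (0,j)"
      unfolding R'_def by (rule peel_entry[OF RC one j])
    also have "(R (Suc n) * Tm m a 0) $$ (0,j) = 0"
      by (rule row_T0_zero[OF s RC one _ j], simp add: a_def rowa_def)
    also have "(R (Suc (Suc n)) * Pm m a) $$ (0,j) = 0" unfolding z2 using j by simp
    finally show "R' (Suc n) $$ (i,j) = 0\<^sub>m 1 m $$ (i,j)" using i j by simp
  qed (insert R'C[of "Suc n"], auto)
  have R'Z: "R' k = 0\<^sub>m 1 m" if k: "k > n" for k
  proof (cases "k = Suc n")
    case True thus ?thesis using R'top by simp
  next
    case False
    hence k': "k > Suc n" using k by simp
    have "R k = 0\<^sub>m 1 m" "R (Suc k) = 0\<^sub>m 1 m" using RZ[OF k'] RZ[of "Suc k"] k' by auto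
    thus ?thesis unfolding R'_def peel_def by simp
  qed
  have R'F: "R' k $$ (0,j) \<in> F" if j: "j < m" for k j
    unfolding R'_def peel_entry[OF RC one j]
    by (rule Fadd[OF F F_mult_mat[OF F RC Tm_carrier RF F_T0[OF F aF _ j] one j] F_mult_mat[OF F RC Pm_carrier RF F_Pm[OF F aF _ j] one j]])
  have evR': "evr 1 m (Suc n) R' z = evr 1 m (Suc n) R z * Tm m a (inverse z)" if "z \<noteq> 0" for z
    unfolding R'_def by (rule evr_peel[where C=R and r=1 and m=m and M="Suc n" and a=a, OF RC RZ R0P that])
  note drop = evr_drop[of R' n 1 m, OF R'top]
  have paraR': "evr 1 m n R' z * ter 1 m n R' z = 1\<^sub>m 1" if z: "z \<noteq> 0" for z
    using para_peel[where C=R and r=1 and m=m and M="Suc n" and a=a, OF s RC RZ R0P z para[OF z]]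
    unfolding R'_def[symmetric] drop .
  have at1R': "evr 1 m n R' 1 $$ (0,j) = V $$ (0,j)" if j: "j < m" for j
    using at1[OF j] evR'[of 1] unfolding drop by simp
  have nzR': "\<exists>j<m. R' n $$ (0,j) \<noteq> 0"
  proof (rule ccontr)
    assume "\<not> ?thesis"
    hence z: "\<And>j. j < m \<Longrightarrow> R' n $$ (0,j) = 0" by auto
    have "R (Suc n) $$ (0,j0) = unpeel m a R' (Suc n) $$ (0,j0)"
      unfolding R'_def using unpeel_peel[where C=R and r=1 and m=m and a=a, OF s RC R0P] by simp
    also have "\<dots> = (R' (Suc n) * Tm m a 0) $$ (0,j0) + (R' n * Pm m a) $$ (0,j0)"
      using unpeel_entry[OF R'C one j0] by simp
    also have "\<dots> = 0" unfolding R'top mult_entry[OF R'C Pm_carrier one j0]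
      using m0 j0 z by simp
    finally show False using nz by simp
  qed
  then obtain j1 where j1: "j1 < m" and nz1: "R' n $$ (0,j1) \<noteq> 0" by auto
  from Suc.IH[OF R'C R'Z R'F j1 nz1 paraR' at1R']
  obtain B where WB: "WM m n F B" and B1: "evr m m n B 1 = V" and Brow: "\<forall>k j. j < m \<longrightarrow> B k $$ (0,j) = R' k $$ (0,j)"
    by blast
  from WB have BC: "\<And>k. B k \<in> carrier_mat m m" and BF: "\<And>k i j. k \<le> n \<Longrightarrow> i < m \<Longrightarrow> j < m \<Longrightarrow> B k $$ (i,j) \<in> F"
    and BZ: "\<And>k. k > n \<Longrightarrow> B k = 0\<^sub>m m m"
    and Bpara: "\<And>z. z \<noteq> 0 \<Longrightarrow> evr m m n B z * ter m m n B z = 1\<^sub>m m"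
    unfolding WM_iff by auto
  from WB obtain c where Bdet: "\<And>z. det (evr m m n B z) = c * z ^ n" unfolding WM_iff by auto
  have BFa: "B k $$ (i,j) \<in> F" if "i < m" "j < m" for k i j
  proof (cases "k \<le> n")
    case True thus ?thesis using BF that by simp
  next
    case False thus ?thesis using BZ[of k] that F0[OF F] by simp
  qed
  define C where "C = unpeel m a B"
  have CC: "\<And>k. C k \<in> carrier_mat m m" unfolding C_def by (rule unpeel_carrier[OF BC])
  have CF: "C k $$ (i,j) \<in> F" if i: "i < m" and j: "j < m" for k i j
  proof -
    have 1: "(B k * Tm m a 0) $$ (i,j) \<in> F"
      by (rule F_mult_mat[OF F BC Tm_carrier BFa[OF i] F_T0[OF F aF _ j] i j])
    have 2: "(if k = 0 then 0 else (B (k - 1) * Pm m a) $$ (i,j)) \<in> F"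
    proof (cases "k = 0")
      case True thus ?thesis using F0[OF F] by simp
    next
      case False
      have "(B (k - 1) * Pm m a) $$ (i,j) \<in> F"
        by (rule F_mult_mat[OF F BC Pm_carrier BFa[OF i] F_Pm[OF F aF _ j] i j])
      thus ?thesis using False by simp
    qed
    show ?thesis unfolding C_def unpeel_entry[OF BC i j] by (rule Fadd[OF F 1 2])
  qed
  have CZ: "C k = 0\<^sub>m m m" if k: "k > Suc n" for k
  proof -
    have "B k = 0\<^sub>m m m" "B (k - 1) = 0\<^sub>m m m" using BZ[of k] BZ[of "k - 1"] k by auto
    thus ?thesis using k unfolding C_def unpeel_def by simp
  qed
  have Crow: "C k $$ (0,j) = R k $$ (0,j)" if j: "j < m" for k j
  proof -
    have eqB: "\<And>k l. l < m \<Longrightarrow> B k $$ (0,l) = R' k $$ (0,l)" using Brow by auto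
    have "C k $$ (0,j) = (B k * Tm m a 0) $$ (0,j) + (if k = 0 then 0 else (B (k - 1) * Pm m a) $$ (0,j))"
      unfolding C_def by (rule unpeel_entry[OF BC m0 j])
    also have "\<dots> = (R' k * Tm m a 0) $$ (0,j) + (if k = 0 then 0 else (R' (k - 1) * Pm m a) $$ (0,j))"
      using row0_mult[where A="B k" and A'="R' k", OF BC R'C m0 one eqB Tm_carrier j]
        row0_mult[where A="B (k - 1)" and A'="R' (k - 1)", OF BC R'C m0 one eqB Pm_carrier j]
      by simp
    also have "\<dots> = unpeel m a R' k $$ (0,j)" by (rule unpeel_entry[OF R'C one j, symmetric])
    also have "\<dots> = R k $$ (0,j)" unfolding R'_def
      using unpeel_peel[where C=R and r=1 and m=m and a=a, OF s RC R0P] by simp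
    finally show ?thesis .
  qed
  have evC: "evr m m (Suc n) C z = evr m m n B z * Tm m a z" for z
    unfolding C_def by (rule evr_unpeel[where C=B and r=m and m=m and M=n and a=a, OF BC BZ])
  have "WM m (Suc n) F C" unfolding WM_iff
  proof (intro conjI allI impI)
    fix k show "C k \<in> carrier_mat m m" by (rule CC)
  next
    fix k i j assume "k \<le> Suc n" "i < m" "j < m"
    thus "C k $$ (i,j) \<in> F" using CF by simp
  next
    fix k assume "Suc n < k" thus "C k = 0\<^sub>m m m" by (rule CZ)
  next
    show "C (Suc n) \<noteq> 0\<^sub>m m m"
    proof
      assume "C (Suc n) = 0\<^sub>m m m"
      hence "C (Suc n) $$ (0,j0) = 0" using j0 m0 by simp
      thus False using Crow[OF j0] nz by simp
    qed
  next
    fix z :: complex assume z: "z \<noteq> 0"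
    show "evr m m (Suc n) C z * ter m m (Suc n) C z = 1\<^sub>m m"
      unfolding C_def by (rule para_unpeel[where C=B and r=m and m=m and M=n and a=a, OF s BC BZ z Bpara[OF z]])
  next
    have "det (evr m m (Suc n) C z) = c * z ^ Suc n" for z
    proof -
      have "det (evr m m (Suc n) C z) = det (evr m m n B z) * det (Tm m a z)"
        unfolding evC by (rule det_mult[OF evr_carrier Tm_carrier])
      also have "\<dots> = c * z ^ Suc n" by (simp add: Bdet det_Tm[OF s])
      finally show ?thesis .
    qed
    thus "\<exists>c. \<forall>z. det (evr m m (Suc n) C z) = c * z ^ Suc n" by blast
  qed
  moreover have "evr m m (Suc n) C 1 = V" unfolding evC B1 using V by simp
  moreover have "\<forall>k j. j < m \<longrightarrow> C k $$ (0,j) = R k $$ (0,j)" using Crow by auto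
  ultimately show "\<exists>C. WM m (Suc n) F C \<and> evr m m (Suc n) C 1 = V \<and> (\<forall>k j. j < m \<longrightarrow> C k $$ (0,j) = R k $$ (0,j))"
    by blast
qed


theorem theorem3:
  fixes F :: "complex set" and m N :: nat
    and v :: "nat \<Rightarrow> complex" and V :: "complex mat"
    and \<alpha> :: "nat \<Rightarrow> nat \<Rightarrow> complex"
  assumes F: "conj_closed_subfield F"
    and m: "m \<ge> 2" and N: "N \<ge> 1"
    and v_F: "\<forall>j<m. v j \<in> F"
    and v_unit: "(\<Sum>j<m. (cmod (v j))\<^sup>2) = 1"
    and V_dim: "V \<in> carrier_mat m m"
    and V_F: "\<forall>i<m. \<forall>j<m. V $$ (i,j) \<in> F"
    and V_unitary: "V * conj_transpose V = 1\<^sub>m m"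
    and V_row: "\<forall>j<m. V $$ (0,j) = v j"
    and \<alpha>_F: "\<forall>k\<le>N. \<forall>j<m. \<alpha> k j \<in> F"
    and \<alpha>_lead: "(\<Sum>j<m. cmod (\<alpha> N j)) > 0"
    and A1_para: "\<forall>z::complex. z \<noteq> 0 \<longrightarrow>
        (\<Sum>j<m. (\<Sum>k\<le>N. \<alpha> k j * z ^ k) * (\<Sum>k\<le>N. cnj (\<alpha> k j) * inverse z ^ k)) = 1"
    and A1_at1: "\<forall>j<m. (\<Sum>k\<le>N. \<alpha> k j) = v j"
  shows "\<exists>!C. WM m N F C \<and> mpoly_eval m N C 1 = V \<and>
            (\<forall>k\<le>N. \<forall>j<m. C k $$ (0,j) = \<alpha> k j)"
proof -
  have m0: "0 < m" using m by simp
  have one: "(0::nat) < 1" by simp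
  obtain j0 where j0: "j0 < m" and nz0: "\<alpha> N j0 \<noteq> 0"
  proof (rule ccontr)
    assume "\<not> thesis"
    hence "\<forall>j<m. \<alpha> N j = 0" using that by blast
    hence "(\<Sum>j<m. cmod (\<alpha> N j)) = 0" by simp
    thus False using \<alpha>_lead by simp
  qed
  define R where "R k = (if k \<le> N then mat 1 m (\<lambda>(_,j). \<alpha> k j) else 0\<^sub>m 1 m)" for k
  have RC: "\<And>k. R k \<in> carrier_mat 1 m" by (simp add: R_def)
  have RZ: "\<And>k. k > N \<Longrightarrow> R k = 0\<^sub>m 1 m" by (simp add: R_def)
  have Re: "R k $$ (0,j) = \<alpha> k j" if "k \<le> N" "j < m" for k j using that by (simp add: R_def)
  have RF: "R k $$ (0,j) \<in> F" if j: "j < m" for k j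
  proof (cases "k \<le> N")
    case True thus ?thesis using Re[OF True j] \<alpha>_F j by simp
  next
    case False thus ?thesis using j F0[OF F] by (simp add: R_def)
  qed
  have nz: "R N $$ (0,j0) \<noteq> 0" using Re[OF _ j0, of N] nz0 by simp
  have sumR: "(\<Sum>k\<le>N. R k $$ (0,j) * w ^ k) = (\<Sum>k\<le>N. \<alpha> k j * w ^ k)" if j: "j < m" for j w
    by (rule sum.cong, simp, simp add: Re j)
  have sumR': "(\<Sum>k\<le>N. cnj (R k $$ (0,j)) * w ^ k) = (\<Sum>k\<le>N. cnj (\<alpha> k j) * w ^ k)" if j: "j < m" for j w
    by (rule sum.cong, simp, simp add: Re j)
  have para: "evr 1 m N R z * ter 1 m N R z = 1\<^sub>m 1" if z: "z \<noteq> 0" for z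
  proof (rule eq_matI)
    fix i j assume "i < dim_row (1\<^sub>m 1 :: complex mat)" "j < dim_col (1\<^sub>m 1 :: complex mat)"
    hence i: "i = 0" and j: "j = 0" by auto
    have "(evr 1 m N R z * ter 1 m N R z) $$ (0,0) = (\<Sum>l\<in>{0..<m}. evr 1 m N R z $$ (0,l) * ter 1 m N R z $$ (l,0))"
      by (rule mult_entry[OF evr_carrier ter_carrier one one])
    also have "\<dots> = (\<Sum>l\<in>{0..<m}. (\<Sum>k\<le>N. \<alpha> k l * z ^ k) * (\<Sum>k\<le>N. cnj (\<alpha> k l) * inverse z ^ k))"
      by (rule sum.cong, simp, simp add: evr_entry ter_entry sumR sumR')
    also have "\<dots> = 1" using A1_para z by (simp add: atLeast0LessThan)
    finally show "(evr 1 m N R z * ter 1 m N R z) $$ (i,j) = 1\<^sub>m 1 $$ (i,j)" using i j by simp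
  qed auto
  have at1: "evr 1 m N R 1 $$ (0,j) = V $$ (0,j)" if j: "j < m" for j
    using j A1_at1 V_row sumR[OF j, of 1] by (simp add: evr_entry)
  have VF: "\<And>i j. i < m \<Longrightarrow> j < m \<Longrightarrow> V $$ (i,j) \<in> F" using V_F by auto
  have "\<exists>C. WM m N F C \<and> evr m m N C 1 = V \<and> (\<forall>k j. j < m \<longrightarrow> C k $$ (0,j) = R k $$ (0,j))"
    apply (rule exist[where F=F and V=V and m=m and n=N and R=R])
    apply (rule F) apply (rule V_dim) apply (rule VF, assumption, assumption) apply (rule V_unitary)
    apply (rule RC) apply (rule RZ, assumption) apply (rule RF, assumption) apply (rule j0) apply (rule nz)
    apply (rule para, assumption) apply (rule at1, assumption) done
  then obtain C where WC: "WM m N F C" and C1: "evr m m N C 1 = V" and Crow: "\<forall>k j. j < m \<longrightarrow> C k $$ (0,j) = R k $$ (0,j)"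
    by blast
  show ?thesis
  proof (rule ex1I[of _ C])
    show "WM m N F C \<and> mpoly_eval m N C 1 = V \<and> (\<forall>k\<le>N. \<forall>j<m. C k $$ (0,j) = \<alpha> k j)"
      using WC C1 Crow Re by (simp add: mpoly_eval_evr)
  next
    fix C' assume "WM m N F C' \<and> mpoly_eval m N C' 1 = V \<and> (\<forall>k\<le>N. \<forall>j<m. C' k $$ (0,j) = \<alpha> k j)"
    hence WC': "WM m N F C'" and C1': "evr m m N C' 1 = V" and Crow': "\<forall>k\<le>N. \<forall>j<m. C' k $$ (0,j) = \<alpha> k j"
      by (auto simp: mpoly_eval_evr)
    have Z: "\<And>k. k > N \<Longrightarrow> C k = 0\<^sub>m m m" and Z': "\<And>k. k > N \<Longrightarrow> C' k = 0\<^sub>m m m"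
      using WC WC' unfolding WM_iff by auto
    have rows: "\<forall>k j. j < m \<longrightarrow> C' k $$ (0,j) = C k $$ (0,j)"
    proof (intro allI impI)
      fix k j assume j: "j < m"
      show "C' k $$ (0,j) = C k $$ (0,j)"
      proof (cases "k \<le> N")
        case True thus ?thesis using Crow' Crow Re[OF True j] j by simp
      next
        case False thus ?thesis using Z[of k] Z'[of k] j m0 by simp
      qed
    qed
    have ex: "\<exists>j<m. C' N $$ (0,j) \<noteq> 0" using Crow' j0 nz0 by auto
    have e: "evr m m N C' 1 = evr m m N C 1" using C1 C1' by simp
    show "C' = C" by (rule uniq[OF WM_PU[OF WC'] WM_PU[OF WC] e rows ex])
  qed
qed


end
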